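(* For every $s\in\mathbb{C}$ with $s\neq0$, $$\eta(s+1)=\frac{2(s-1)}{s}\,\eta(s)+\frac{2^{s-1}\pi}{s}\int_0^\infty \frac{\cos(s\arctan t)\,(1+t^2)^{-s/2}\,\sinh(\pi t/2)}{\cosh^2(\pi t/2)}\,t\,dt .$$
   Context: $\eta(s)=(1-2^{1-s})\zeta(s)$ is Dirichlet's eta function, equal to $\sum_{k\ge1}(-1)^{k+1}k^{-s}$ for $\operatorname{Re}s>0$ and entire. *)

theory Defs
  imports "HOL-Complex_Analysis.Complex_Analysis"
begin

text \<open>Dirichlet's eta function: the unique entire function which, for Re s > 0,
  is the sum of the alternating Dirichlet series sum_{k>=1} (-1)^(k+1) k^(-s).
  (Uniqueness holds by the identity theorem; it equals (1 - 2^(1-s)) zeta(s).)\<close>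

definition dirichlet_eta :: "complex \<Rightarrow> complex" where
  "dirichlet_eta = (THE f. f holomorphic_on UNIV \<and>
      (\<forall>s. 0 < Re s \<longrightarrow>
         (\<lambda>k. (-1) ^ k / (of_nat (Suc k)) powr s) sums f s))"

end

theory Submission
  imports Defs "HOL-Real_Asymp.Real_Asymp"
begin


definition sw :: "real \<Rightarrow> real" where "sw t = 1 / cosh (pi * t / 2)"
definition P :: "complex \<Rightarrow> real \<Rightarrow> real \<Rightarrow> complex" where
  "P s a t = (of_real a + \<i> * of_real t) powr (-s)"

lemma sw_pos: "sw t > 0" by (simp add: sw_def)

lemma sw_le: "sw t \<le> 2 * exp (-pi * \<bar>t\<bar> / 2)"
proof -
  have "cosh (pi * t / 2) = cosh (pi * \<bar>t\<bar> / 2)"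
    by (cases "t \<ge> 0") (auto simp: cosh_minus)
  also have "\<dots> \<ge> exp (pi * \<bar>t\<bar> / 2) / 2"
    unfolding cosh_def by (simp add: field_simps)
  finally have c: "cosh (pi * t / 2) \<ge> exp (pi * \<bar>t\<bar> / 2) / 2" .
  have "sw t \<le> 1 / (exp (pi * \<bar>t\<bar> / 2) / 2)"
    unfolding sw_def using c by (intro divide_left_mono) auto
  also have "\<dots> = 2 * exp (-pi * \<bar>t\<bar> / 2)" by (simp add: exp_minus field_simps)
  finally show ?thesis .
qed

lemma norm_P_le:
  assumes "a > 0"
  shows "norm (P s a t) \<le> norm (of_real a + \<i> * of_real t) powr (- Re s) * exp (pi * \<bar>Im s\<bar>)"
proof -
  define z where "z = of_real a + \<i> * of_real t"
  have z0: "z \<noteq> 0" using assms by (auto simp: z_def complex_eq_iff)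
  have "norm (P s a t) = exp (Re (- s * Ln z))"
    using z0 by (simp add: P_def z_def powr_def)
  also have "Re (- s * Ln z) = - Re s * ln (norm z) + Im s * Im (Ln z)"
    using z0 by simp
  also have "Im s * Im (Ln z) \<le> pi * \<bar>Im s\<bar>"
  proof -
    have "\<bar>Im (Ln z)\<bar> \<le> pi" using mpi_less_Im_Ln[of z] Im_Ln_le_pi[of z] z0 by auto
    hence "\<bar>Im s * Im (Ln z)\<bar> \<le> \<bar>Im s\<bar> * pi" by (simp add: abs_mult mult_left_mono)
    thus ?thesis by (simp add: mult.commute)
  qed
  hence "exp (- Re s * ln (norm z) + Im s * Im (Ln z)) \<le> exp (- Re s * ln (norm z) + pi * \<bar>Im s\<bar>)"
    by simp
  also have "\<dots> = exp (- Re s * ln (norm z)) * exp (pi * \<bar>Im s\<bar>)"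
    by (rule exp_add)
  also have "exp (- Re s * ln (norm z)) = norm z powr (- Re s)"
    using z0 by (simp add: powr_def mult.commute)
  finally show ?thesis by (simp add: z_def)
qed

definition Cst :: "real \<Rightarrow> real \<Rightarrow> real" where
  "Cst r a = 2 * exp (r * (ln (4*r+4) - 1)) * exp (a/4)"

lemma powr_exp_bound:
  fixes r u :: real
  assumes r: "r \<ge> 0" and u: "u > 0"
  shows "u powr r \<le> exp (r * (ln (4*r+4) - 1)) * exp (u/4)"
proof -
  define c :: real where "c = 4*r+4"
  have c: "c > 0" using r by (simp add: c_def)
  have "ln u = ln c + ln (u/c)" using c u by (simp add: ln_div)
  also have "ln (u/c) \<le> u/c - 1" using c u by (intro ln_le_minus_one) auto
  finally have "r * ln u \<le> r * (ln c + (u/c - 1))" using r by (simp add: mult_left_mono)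
  also have "\<dots> = r * (ln c - 1) + r * u / c" by (simp add: algebra_simps)
  also have "r * u / c \<le> u / 4"
    using r u c by (simp add: c_def field_simps)
  finally have "r * ln u \<le> r * (ln c - 1) + u/4" by simp
  hence "exp (r * ln u) \<le> exp (r * (ln c - 1) + u/4)" by simp
  thus ?thesis using u by (simp add: powr_def exp_add c_def mult.commute)
qed

lemma majorant:
  assumes r: "r \<ge> 0" and a: "a \<ge> 1"
  shows "(a + \<bar>t\<bar>) powr r * sw t \<le> Cst r a * exp (- \<bar>t\<bar>)"
proof -
  have "(a + \<bar>t\<bar>) powr r * sw t \<le> (exp (r * (ln (4*r+4) - 1)) * exp ((a + \<bar>t\<bar>)/4)) * (2 * exp (-pi * \<bar>t\<bar> / 2))"
    using a by (intro mult_mono powr_exp_bound sw_le r) (auto simp: sw_def)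
  also have "\<dots> = Cst r a * exp (\<bar>t\<bar>/4 - pi * \<bar>t\<bar> / 2)"
    by (simp add: Cst_def exp_add[symmetric] exp_diff field_simps)
  also have "\<dots> \<le> Cst r a * exp (- \<bar>t\<bar>)"
  proof -
    have "\<bar>t\<bar>/4 - pi * \<bar>t\<bar> / 2 \<le> - \<bar>t\<bar>"
    proof -
      have "3 * \<bar>t\<bar> \<le> pi * \<bar>t\<bar>" using pi_gt3 by (intro mult_right_mono) auto
      thus ?thesis by linarith
    qed
    thus ?thesis by (intro mult_left_mono) (auto simp: Cst_def)
  qed
  finally show ?thesis .
qed

lemma norm_powr_le:
  assumes a: "a \<ge> 1"
  shows "norm (of_real a + \<i> * of_real t :: complex) powr x \<le> (a + \<bar>t\<bar>) powr \<bar>x\<bar>"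
proof -
  define z :: complex where "z = of_real a + \<i> * of_real t"
  have n1: "norm z \<ge> 1" using a abs_Re_le_cmod[of z] by (simp add: z_def)
  have n2: "norm z \<le> a + \<bar>t\<bar>"
    using norm_triangle_ineq[of "of_real a" "\<i> * of_real t"] a by (simp add: z_def norm_mult)
  show ?thesis
  proof (cases "x \<ge> 0")
    case True
    thus ?thesis using n1 n2 by (simp add: z_def[symmetric] powr_mono2)
  next
    case False
    have "norm z powr x \<le> norm z powr 0" using n1 False by (intro powr_mono) auto
    hence "norm z powr x \<le> 1" using n1 by (auto split: if_splits)
    also have "1 \<le> (a + \<bar>t\<bar>) powr \<bar>x\<bar>" using a by (intro ge_one_powr_ge_zero) auto
    finally show ?thesis by (simp add: z_def)
  qed
qed

lemma P_bound:
  assumes a: "a \<ge> 1" and R: "\<bar>Re s\<bar> \<le> R" "\<bar>Im s\<bar> \<le> R" and k: "k \<ge> 0"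
  shows "norm (P s a t) * (a + \<bar>t\<bar>) powr k * sw t \<le> exp (pi * R) * Cst (R + k) a * exp (- \<bar>t\<bar>)"
proof -
  have R0: "R \<ge> 0" using R by linarith
  have "norm (P s a t) \<le> (a + \<bar>t\<bar>) powr R * exp (pi * R)"
  proof -
    have "norm (P s a t) \<le> norm (of_real a + \<i> * of_real t :: complex) powr (- Re s) * exp (pi * \<bar>Im s\<bar>)"
      using a by (intro norm_P_le) auto
    also have "\<dots> \<le> (a + \<bar>t\<bar>) powr R * exp (pi * R)"
    proof (intro mult_mono)
      have "norm (of_real a + \<i> * of_real t :: complex) powr (- Re s) \<le> (a + \<bar>t\<bar>) powr \<bar>- Re s\<bar>"
        using a by (rule norm_powr_le)
      also have "\<dots> \<le> (a + \<bar>t\<bar>) powr R" using a R by (intro powr_mono) auto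
      finally show "norm (of_real a + \<i> * of_real t :: complex) powr (- Re s) \<le> (a + \<bar>t\<bar>) powr R" .
    qed (use R in auto)
    finally show ?thesis .
  qed
  hence "norm (P s a t) * (a + \<bar>t\<bar>) powr k * sw t \<le> (a + \<bar>t\<bar>) powr R * exp (pi * R) * (a + \<bar>t\<bar>) powr k * sw t"
    by (intro mult_right_mono) (auto simp: sw_def)
  also have "\<dots> = exp (pi * R) * ((a + \<bar>t\<bar>) powr (R + k) * sw t)"
    by (simp add: powr_add)
  also have "\<dots> \<le> exp (pi * R) * (Cst (R + k) a * exp (- \<bar>t\<bar>))"
    using R0 k a by (intro mult_left_mono majorant) auto
  finally show ?thesis by simp
qed

lemma expm_abs_int: "(\<lambda>t::real. exp (- \<bar>t\<bar>)) absolutely_integrable_on UNIV"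
proof -
  have "(\<lambda>t::real. exp (- 1 * t)) integrable_on {0..}"
    by (rule integrable_on_exp_minus_to_infinity) auto
  hence i1: "(\<lambda>t::real. exp (- \<bar>t\<bar>)) integrable_on {0..}"
    by (rule integrable_eq) auto
  hence a1: "(\<lambda>t::real. exp (- \<bar>t\<bar>)) absolutely_integrable_on {0..}"
    by (intro nonnegative_absolutely_integrable_1) auto
  have s1: "uminus ` {..0::real} \<subseteq> {0..}" by auto
  have s2: "uminus ` {0::real..} \<subseteq> {..0}" by auto
  have s3: "{..0::real} \<in> sets lebesgue" by simp
  have "(\<lambda>x. (\<lambda>t::real. exp (- \<bar>t\<bar>)) (-x)) absolutely_integrable_on {..0}"
    using has_absolute_integral_reflect_real[OF s1 s2 s3, of "\<lambda>t::real. exp (- \<bar>t\<bar>)"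
        "integral {0..} (\<lambda>t::real. exp (- \<bar>t\<bar>))"] a1
    by blast
  hence a2: "(\<lambda>t::real. exp (- \<bar>t\<bar>)) absolutely_integrable_on {..0}" by simp
  have "(\<lambda>t::real. exp (- \<bar>t\<bar>)) absolutely_integrable_on ({0..} \<union> {..0})"
    by (rule absolutely_integrable_Un[OF a1 a2])
  moreover have "({0..} \<union> {..0}) = (UNIV :: real set)" by auto
  ultimately show ?thesis by simp
qed

lemma expm_int: "(\<lambda>t::real. C * exp (- \<bar>t\<bar>)) integrable_on UNIV"
  using expm_abs_int integrable_cmul[of "\<lambda>t::real. exp (- \<bar>t\<bar>)" UNIV C]
  by (simp add: absolutely_integrable_on_def)

lemma bounded_int:
  fixes f :: "real \<Rightarrow> complex"
  assumes "continuous_on UNIV f" "\<And>t. norm (f t) \<le> C * exp (- \<bar>t\<bar>)"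
  shows "f integrable_on UNIV" "f absolutely_integrable_on UNIV"
proof -
  show i: "f integrable_on UNIV"
    by (rule measurable_bounded_by_integrable_imp_integrable[OF _ expm_int assms(2)])
       (auto intro: continuous_imp_measurable_on_sets_lebesgue assms(1))
  show "f absolutely_integrable_on UNIV"
    by (rule absolutely_integrable_integrable_bound[OF assms(2) i expm_int])
qed


definition ker :: "complex \<Rightarrow> real \<Rightarrow> real \<Rightarrow> complex" where
  "ker s a t = P s a t * of_real (sw t)"

definition Phi :: "complex \<Rightarrow> real \<Rightarrow> complex" where
  "Phi s a = integral UNIV (ker s a)"

lemma cont_P: "a > 0 \<Longrightarrow> continuous_on UNIV (P s a)"
  unfolding P_def
  by (intro continuous_intros) (auto simp: complex_nonpos_Reals_iff complex_eq_iff)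

lemma cont_sw: "continuous_on UNIV sw"
  unfolding sw_def by (intro continuous_intros) auto

lemma cont_ker: "a > 0 \<Longrightarrow> continuous_on UNIV (ker s a)"
  unfolding ker_def by (intro continuous_intros cont_P cont_sw) auto

lemma ker_bound:
  assumes a: "a \<ge> 1" and R: "\<bar>Re s\<bar> \<le> R" "\<bar>Im s\<bar> \<le> R"
  shows "norm (ker s a t) \<le> exp (pi * R) * Cst R a * exp (- \<bar>t\<bar>)"
proof -
  have "norm (P s a t) * (a + \<bar>t\<bar>) powr 0 * sw t \<le> exp (pi * R) * Cst (R + 0) a * exp (- \<bar>t\<bar>)"
    by (rule P_bound[OF a R]) auto
  moreover have "(a + \<bar>t\<bar>) powr 0 = 1" using a by simp
  ultimately show ?thesis using sw_pos[of t] by (simp add: ker_def norm_mult)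
qed

lemma ker_int: "a \<ge> 1 \<Longrightarrow> ker s a integrable_on UNIV"
  by (rule bounded_int(1)[OF cont_ker ker_bound[of a s "\<bar>Re s\<bar> + \<bar>Im s\<bar>"]]) auto

lemma lim_UNIV:
  fixes f :: "real \<Rightarrow> 'b::euclidean_space"
  assumes cont: "continuous_on UNIV f" and bd: "\<And>t. norm (f t) \<le> C * exp (- \<bar>t\<bar>)"
  shows "(\<lambda>n. integral {- real n..real n} f) \<longlonglongrightarrow> integral UNIV f"
proof -
  define fk where "fk = (\<lambda>k::nat. \<lambda>t. if t \<in> {- real k..real k} then f t else 0)"
  have i: "fk k integrable_on UNIV" for k
    unfolding fk_def integrable_restrict_UNIV
    by (intro integrable_continuous_interval continuous_on_subset[OF cont]) auto
  have le: "norm (fk k x) \<le> C * exp (- \<bar>x\<bar>)" for k x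
    using bd[of x] order_trans[OF norm_ge_zero bd[of x]] by (auto simp: fk_def)
  have conv: "(\<lambda>k. fk k x) \<longlonglongrightarrow> f x" for x
  proof (rule tendsto_eventually)
    show "\<forall>\<^sub>F k in sequentially. fk k x = f x"
    proof (rule eventually_sequentiallyI[of "nat \<lceil>\<bar>x\<bar>\<rceil>"])
      fix k assume "nat \<lceil>\<bar>x\<bar>\<rceil> \<le> k"
      hence "\<bar>x\<bar> \<le> real k" by linarith
      thus "fk k x = f x" by (auto simp: fk_def)
    qed
  qed
  have "(\<lambda>k. integral UNIV (fk k)) \<longlonglongrightarrow> integral UNIV f"
    by (rule dominated_convergence(2)[OF i expm_int le conv])
  moreover have "integral UNIV (fk k) = integral {- real k..real k} f" for k
    unfolding fk_def by (rule integral_restrict_UNIV)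
  ultimately show ?thesis by simp
qed

lemma tail_bound:
  fixes f :: "real \<Rightarrow> complex"
  assumes cont: "continuous_on UNIV f" and bd: "\<And>t. norm (f t) \<le> M * exp (- \<bar>t\<bar>)"
  shows "norm (integral UNIV f - integral {a..b} f) \<le>
           M * (integral UNIV (\<lambda>t. exp (- \<bar>t\<bar>)) - integral {a..b} (\<lambda>t. exp (- \<bar>t\<bar>)))"
proof -
  define e where "e = (\<lambda>t::real. exp (- \<bar>t\<bar>))"
  have fi: "f integrable_on UNIV" by (rule bounded_int(1)[OF cont bd])
  have fiI: "(\<lambda>t. if t \<in> {a..b} then f t else 0) integrable_on UNIV"
    unfolding integrable_restrict_UNIV
    by (intro integrable_continuous_interval continuous_on_subset[OF cont]) auto
  have ei: "e integrable_on UNIV" using expm_int[of 1] by (simp add: e_def)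
  have eiI: "(\<lambda>t. if t \<in> {a..b} then e t else 0) integrable_on UNIV"
    unfolding integrable_restrict_UNIV e_def
    by (intro integrable_continuous_interval continuous_intros)
  define g where "g = (\<lambda>t. f t - (if t \<in> {a..b} then f t else 0))"
  define h where "h = (\<lambda>t. M * (e t - (if t \<in> {a..b} then e t else 0)))"
  have gi: "g integrable_on UNIV" unfolding g_def by (intro integrable_diff fi fiI)
  have hi: "h integrable_on UNIV" unfolding h_def
    using integrable_cmul[OF integrable_diff[OF ei eiI], of M] by simp
  have "integral UNIV g = integral UNIV f - integral {a..b} f"
    unfolding g_def by (subst integral_diff[OF fi fiI]) (subst integral_restrict_UNIV, rule refl)
  moreover have "integral UNIV h = M * (integral UNIV e - integral {a..b} e)"
    unfolding h_def integral_mult_right integral_diff[OF ei eiI]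
    by (subst integral_restrict_UNIV, rule refl)
  moreover have "norm (integral UNIV g) \<le> integral UNIV h"
  proof (rule integral_norm_bound_integral[OF gi hi])
    fix t show "norm (g t) \<le> h t"
      using bd[of t] order_trans[OF norm_ge_zero bd[of t]] by (auto simp: g_def h_def e_def)
  qed
  ultimately show ?thesis by (simp add: e_def)
qed


lemma ker_deriv:
  "((\<lambda>x. ker x a t) has_field_derivative (- Ln (of_real a + \<i> * of_real t) * ker x a t)) (at x within U)"
  if "a > 0"
proof -
  have z: "of_real a + \<i> * of_real t \<noteq> 0" using that by (auto simp: complex_eq_iff)
  show ?thesis
    unfolding ker_def P_def powr_def using z
    by (auto intro!: derivative_eq_intros simp: algebra_simps)
qed

lemma Kn_holo: "(\<lambda>s. integral {a..b} (ker s 1)) holomorphic_on UNIV"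
proof -
  have "(\<lambda>s. integral (cbox a b) (ker s 1)) holomorphic_on UNIV"
  proof (rule leibniz_rule_holomorphic[where fx = "\<lambda>x t. - Ln (of_real 1 + \<i> * of_real t) * ker x 1 t"])
    show "((\<lambda>x. ker x 1 t) has_field_derivative (- Ln (of_real 1 + \<i> * of_real t) * ker x 1 t)) (at x within UNIV)"
      for x t by (rule ker_deriv) auto
    show "ker x 1 integrable_on cbox a b" for x
      using integrable_continuous_interval[OF continuous_on_subset[OF cont_ker[of 1 x]]] by auto
    show "continuous_on (UNIV \<times> cbox a b) (\<lambda>(x, t). - Ln (of_real 1 + \<i> * of_real t) * ker x 1 t)"
      unfolding ker_def P_def sw_def case_prod_unfold
      by (intro continuous_intros) (auto simp: complex_nonpos_Reals_iff complex_eq_iff)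
  qed auto
  thus ?thesis by simp
qed

lemma Phi_holo: "(\<lambda>s. Phi s 1) holomorphic_on UNIV"
proof (rule holomorphic_uniform_sequence[where f = "\<lambda>n s. integral {- real n..real n} (ker s 1)"])
  show "(\<lambda>s. integral {- real n..real n} (ker s 1)) holomorphic_on UNIV" for n by (rule Kn_holo)
  fix z :: complex
  define R where "R = cmod z + 1"
  define M where "M = exp (pi * R) * Cst R 1"
  define E where "E = (\<lambda>n::nat. integral UNIV (\<lambda>t. exp (- \<bar>t\<bar>)) - integral {- real n..real n} (\<lambda>t::real. exp (- \<bar>t\<bar>)))"
  have E0: "E \<longlonglongrightarrow> 0"
  proof -
    have "(\<lambda>n. integral {- real n..real n} (\<lambda>t::real. exp (- \<bar>t\<bar>))) \<longlonglongrightarrow> integral UNIV (\<lambda>t. exp (- \<bar>t\<bar>))"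
      by (rule lim_UNIV[where C = 1]) (auto intro!: continuous_intros)
    hence "(\<lambda>n. integral UNIV (\<lambda>t. exp (- \<bar>t\<bar>)) - integral {- real n..real n} (\<lambda>t::real. exp (- \<bar>t\<bar>))) \<longlonglongrightarrow> integral UNIV (\<lambda>t. exp (- \<bar>t\<bar>)) - integral UNIV (\<lambda>t::real. exp (- \<bar>t\<bar>))"
      by (intro tendsto_diff tendsto_const)
    thus ?thesis by (simp add: E_def)
  qed
  have bd: "dist (integral {- real n..real n} (ker s 1)) (Phi s 1) \<le> M * E n" if "s \<in> cball z 1" for s n
  proof -
    have R: "\<bar>Re s\<bar> \<le> R" "\<bar>Im s\<bar> \<le> R"
      using that abs_Re_le_cmod[of s] abs_Im_le_cmod[of s] norm_triangle_ineq2[of s z]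
      by (auto simp: R_def dist_norm norm_minus_commute)
    have "dist (integral {- real n..real n} (ker s 1)) (Phi s 1) = norm (integral UNIV (ker s 1) - integral {- real n..real n} (ker s 1))"
      by (simp add: Phi_def dist_norm norm_minus_commute)
    also have "\<dots> \<le> M * E n"
      unfolding M_def E_def
      by (rule tail_bound[OF cont_ker ker_bound[OF _ R]]) auto
    finally show ?thesis .
  qed
  have M0: "M \<ge> 0" by (simp add: M_def Cst_def)
  show "\<exists>d>0. cball z d \<subseteq> UNIV \<and> uniform_limit (cball z d) (\<lambda>n s. integral {- real n..real n} (ker s 1)) (\<lambda>s. Phi s 1) sequentially"
  proof (intro exI conjI)
    show "uniform_limit (cball z 1) (\<lambda>n s. integral {- real n..real n} (ker s 1)) (\<lambda>s. Phi s 1) sequentially"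
      unfolding uniform_limit_iff
    proof (intro allI impI)
      fix e :: real assume e: "e > 0"
      have "\<forall>\<^sub>F n in sequentially. M * E n < e"
      proof -
        have "(\<lambda>n. M * E n) \<longlonglongrightarrow> M * 0" by (intro tendsto_mult tendsto_const E0)
        thus ?thesis using e by (simp add: order_tendsto_iff)
      qed
      thus "\<forall>\<^sub>F n in sequentially. \<forall>s\<in>cball z 1. dist (integral {- real n..real n} (ker s 1)) (Phi s 1) < e"
        by eventually_elim (auto intro: le_less_trans[OF bd])
    qed
  qed auto
qed auto


lemma cosh_of_real': "cosh (complex_of_real x) = of_real (cosh x)"
  using of_real_exp[of x, where 'a=complex] of_real_exp[of "-x", where 'a=complex] by (simp add: cosh_field_def)

lemma sinh_of_real': "sinh (complex_of_real x) = of_real (sinh x)"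
  using of_real_exp[of x, where 'a=complex] of_real_exp[of "-x", where 'a=complex] by (simp add: sinh_field_def)

lemma cosh_shift: "cosh (z - \<i> * of_real pi :: complex) = - cosh z"
proof -
  have "exp (z - \<i> * of_real pi) = - exp z" by (simp add: exp_diff)
  moreover have "exp (- (z - \<i> * of_real pi)) = - exp (- z)"
    by (simp add: exp_diff exp_minus field_simps)
  ultimately show ?thesis unfolding cosh_field_def by (simp add: field_simps)
qed

lemma norm_cosh_ge: "norm (cosh (z::complex)) \<ge> \<bar>sinh (Re z)\<bar>"
proof -
  have "2 * norm (cosh z) = norm (exp z + exp (- z))" by (simp add: cosh_field_def)
  moreover have "norm (exp z + exp (-z)) \<ge> \<bar>exp (Re z) - exp (- Re z)\<bar>"
    using norm_diff_ineq[of "exp z" "exp (-z)"] norm_diff_ineq[of "exp (-z)" "exp z"]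
    by (auto simp: add.commute)
  moreover have "\<bar>exp (Re z) - exp (- Re z)\<bar> = 2 * \<bar>sinh (Re z)\<bar>"
    by (simp add: sinh_field_def)
  ultimately show ?thesis by linarith
qed

lemma cosh_zero:
  assumes "cosh (of_real pi * z / 2) = 0" "-3 < Im z" "Im z < 1"
  shows "z = - \<i>"
proof -
  have "cos (\<i> * (of_real pi * z / 2)) = 0" using assms(1) by (simp add: cosh_conv_cos)
  then obtain n :: int where n: "\<i> * (of_real pi * z / 2) = of_real (n * pi) + of_real pi / 2"
    by (auto simp: cos_eq_0)
  have re: "Re z = 0" using arg_cong[OF n, of Im] by simp
  have im: "- pi * Im z / 2 = n * pi + pi / 2" using arg_cong[OF n, of Re] by simp
  hence "pi * (Im z + 2 * n + 1) = 0" by (simp add: field_simps)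
  hence "Im z = - (2 * n + 1)" by simp
  hence "n = 0" using assms(2,3) by linarith
  thus ?thesis using re \<open>Im z = - (2 * n + 1)\<close> by (simp add: complex_eq_iff)
qed

lemma norm_powr_gen:
  fixes w s :: complex
  assumes "w \<noteq> 0"
  shows "norm (w powr (-s)) \<le> norm w powr (- Re s) * exp (pi * \<bar>Im s\<bar>)"
proof -
  have "norm (w powr (-s)) = exp (Re (- s * Ln w))"
    using assms by (simp add: powr_def)
  also have "Re (- s * Ln w) = - Re s * ln (norm w) + Im s * Im (Ln w)"
    using assms by simp
  also have "Im s * Im (Ln w) \<le> pi * \<bar>Im s\<bar>"
  proof -
    have "\<bar>Im (Ln w)\<bar> \<le> pi" using mpi_less_Im_Ln[of w] Im_Ln_le_pi[of w] assms by auto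
    hence "\<bar>Im s * Im (Ln w)\<bar> \<le> \<bar>Im s\<bar> * pi" by (simp add: abs_mult mult_left_mono)
    thus ?thesis by (simp add: mult.commute)
  qed
  hence "exp (- Re s * ln (norm w) + Im s * Im (Ln w)) \<le> exp (- Re s * ln (norm w) + pi * \<bar>Im s\<bar>)"
    by simp
  also have "\<dots> = exp (- Re s * ln (norm w)) * exp (pi * \<bar>Im s\<bar>)"
    by (rule exp_add)
  also have "exp (- Re s * ln (norm w)) = norm w powr (- Re s)"
    using assms by (simp add: powr_def mult.commute)
  finally show ?thesis .
qed


definition hh :: "complex \<Rightarrow> real \<Rightarrow> complex \<Rightarrow> complex" where
  "hh s a z = (of_real a + \<i> * z) powr (-s) / cosh (of_real pi * z / 2)"

definition SS :: "complex set" where "SS = {z. -3 < Im z \<and> Im z < 1}"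

lemma open_SS: "open SS"
  unfolding SS_def by (intro open_Collect_conj open_Collect_less continuous_intros)

lemma convex_SS: "convex SS"
proof -
  have c1: "convex {x::complex. inner \<i> x > -3}" by (rule convex_halfspace_gt)
  have c2: "convex {x::complex. inner \<i> x < 1}" by (rule convex_halfspace_lt)
  have "SS = {x. inner \<i> x > -3} \<inter> {x. inner \<i> x < 1}"
    by (auto simp: SS_def inner_complex_def)
  thus ?thesis using convex_Int[OF c1 c2] by simp
qed

lemma base_ok: "a \<ge> 1 \<Longrightarrow> Im z < 1 \<Longrightarrow> of_real a + \<i> * z \<notin> \<real>\<^sub>\<le>\<^sub>0"
  by (auto simp: complex_nonpos_Reals_iff)

lemma holomorphic_on_cosh' [holomorphic_intros]:
  "f holomorphic_on A \<Longrightarrow> (\<lambda>x. cosh (f x :: complex)) holomorphic_on A"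
  unfolding cosh_conv_cos by (intro holomorphic_intros)

lemma hh_holo: "a \<ge> 1 \<Longrightarrow> hh s a holomorphic_on SS - {-\<i>}"
  unfolding hh_def
  by (intro holomorphic_intros base_ok) (auto simp: SS_def dest: cosh_zero)

lemma hh_cont: "a \<ge> 1 \<Longrightarrow> continuous_on (SS - {-\<i>}) (hh s a)"
  using hh_holo holomorphic_on_imp_continuous_on by blast

lemma hh_residue:
  assumes a: "a \<ge> 1"
  shows "residue (hh s a) (-\<i>) = 2 * \<i> / pi * (of_real (a + 1)) powr (-s)"
proof (rule residue_simple'[OF open_SS _ hh_holo[OF a]])
  show "- \<i> \<in> SS" by (simp add: SS_def)
  define N where "N = (\<lambda>z. (of_real a + \<i> * z) powr (-s))"
  define D :: complex where "D = of_real pi / 2 * sinh (of_real pi * (-\<i>) / 2)"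
  have e: "\<i> * (of_real pi * (-\<i>)/2) = (of_real (pi/2)::complex)" by (simp add: field_simps)
  have "sinh (of_real pi * (-\<i>)/2 :: complex) = -\<i>"
    by (simp only: sinh_conv_sin e sin_of_real) simp
  hence D: "D = - \<i> * of_real pi / 2"
    by (simp add: D_def)
  have der: "((\<lambda>z. cosh (of_real pi * z / 2)) has_field_derivative D) (at (-\<i>))"
    unfolding D_def by (auto intro!: derivative_eq_intros simp: algebra_simps)
  have c0: "cosh (of_real pi * (-\<i>) / 2 :: complex) = 0"
    by (simp only: cosh_conv_cos e cos_of_real) simp
  from der have "((\<lambda>z. (cosh (of_real pi * z / 2) - 0) / (z - (-\<i>))) \<longlongrightarrow> D) (at (-\<i>))"
    using c0 by (simp add: has_field_derivative_iff)
  hence "((\<lambda>z. inverse ((cosh (of_real pi * z / 2) - 0) / (z - (-\<i>)))) \<longlongrightarrow> inverse D) (at (-\<i>))"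
    by (rule tendsto_inverse) (simp add: D)
  hence L1: "((\<lambda>z. (z + \<i>) / cosh (of_real pi * z / 2)) \<longlongrightarrow> inverse D) (at (-\<i>))"
    by simp
  have "isCont N (-\<i>)"
    unfolding N_def using a
    by (intro continuous_intros) (auto simp: complex_nonpos_Reals_iff)
  hence L2: "(N \<longlongrightarrow> N (-\<i>)) (at (-\<i>))" by (simp add: isCont_def)
  have lim: "((\<lambda>z. N z * ((z + \<i>) / cosh (of_real pi * z / 2))) \<longlongrightarrow> N (-\<i>) * inverse D) (at (-\<i>))"
    by (intro tendsto_mult L1 L2)
  have ve: "N (-\<i>) * inverse D = 2 * \<i> / pi * (of_real (a + 1)) powr (-s)"
    by (simp add: N_def D field_simps)
  have fe: "(\<lambda>w. hh s a w * (w - - \<i>)) = (\<lambda>z. N z * ((z + \<i>) / cosh (of_real pi * z / 2)))"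
    by (simp add: hh_def N_def fun_eq_iff)
  show "((\<lambda>w. hh s a w * (w - - \<i>)) \<longlongrightarrow> 2 * \<i> / pi * (of_real (a + 1)) powr (-s)) (at (-\<i>))"
    unfolding fe ve[symmetric] by (rule lim)
qed

lemma rect_eq:
  assumes a: "a \<ge> 1" and n: "n \<ge> 1"
  shows "contour_integral (rectpath (Complex (-n) (-2)) (Complex n 0)) (hh s a) =
           - 4 * (of_real (a + 1)) powr (-s)"
proof -
  let ?g = "rectpath (Complex (-n) (-2)) (Complex n 0)"
  have pi: "path_image ?g \<subseteq> SS - {-\<i>}"
    using n by (subst path_image_rectpath) (auto simp: SS_def complex_eq_iff)
  have homo: "\<forall>z. z \<notin> SS \<longrightarrow> winding_number ?g z = 0"
  proof (intro allI impI)
    fix z assume "z \<notin> SS"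
    hence "z \<notin> cbox (Complex (-n) (-2)) (Complex n 0)"
      by (auto simp: SS_def in_cbox_complex_iff)
    thus "winding_number ?g z = 0" using n by (intro winding_number_rectpath_outside) auto
  qed
  have R: "contour_integral ?g (hh s a) = 2 * pi * \<i> * (\<Sum>p\<in>{-\<i>}. winding_number ?g p * residue (hh s a) p)"
    by (rule Residue_theorem[OF open_SS convex_connected[OF convex_SS] _ hh_holo[OF a] _ _ pi homo]) auto
  have W: "winding_number ?g (-\<i>) = 1"
    using n by (intro winding_number_rectpath) (auto simp: in_box_complex_iff)
  show ?thesis using R W hh_residue[OF a, of s] by simp
qed

lemma hh_integrable:
  assumes a: "a \<ge> 1" and sub: "closed_segment p q \<subseteq> SS - {-\<i>}"
  shows "hh s a contour_integrable_on linepath p q"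
  by (rule contour_integrable_continuous_linepath[OF continuous_on_subset[OF hh_cont[OF a] sub]])

lemma hh_real: "hh s a (of_real x) = ker s a x"
proof -
  have c: "cosh (of_real pi * of_real x / 2 :: complex) = of_real (cosh (pi * x / 2))"
    using cosh_of_real'[of "pi*x/2"] by simp
  have "hh s a (of_real x) = (of_real a + \<i> * of_real x) powr (-s) / of_real (cosh (pi*x/2))"
    by (simp only: hh_def c)
  also have "\<dots> = ker s a x"
    by (simp only: ker_def P_def sw_def of_real_divide of_real_1 times_divide_eq_right mult_1_right)
  finally show ?thesis .
qed

lemma hh_shift: "hh s a (of_real x + - 2 * \<i>) = - ker s (a + 2) x"
proof -
  have e: "of_real pi * (of_real x + - 2 * \<i>) / 2 = of_real (pi * x / 2) - \<i> * of_real pi"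
    by (simp add: field_simps)
  have c: "cosh (of_real pi * (of_real x + - 2 * \<i>) / 2) = - of_real (cosh (pi * x / 2))"
    by (simp only: e cosh_shift cosh_of_real')
  have "of_real a + \<i> * (of_real x + - 2 * \<i>) = of_real (a + 2) + \<i> * of_real x"
    by (simp add: field_simps)
  thus ?thesis using c by (simp add: hh_def ker_def P_def sw_def field_simps)
qed

lemma bottom_eq:
  assumes n: "n > 0"
  shows "contour_integral (linepath (Complex (-n) (-2)) (Complex n (-2))) (hh s a) =
           - integral {-n..n} (ker s (a + 2))"
proof -
  have "linepath (Complex (-n) (-2)) (Complex n (-2)) = (+) (- 2 * \<i>) \<circ> linepath (of_real (-n)) (of_real n)"
    by (simp add: linepath_translate Complex_eq mult.commute)
  hence "contour_integral (linepath (Complex (-n) (-2)) (Complex n (-2))) (hh s a) =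
           contour_integral (linepath (of_real (-n)) (of_real n)) (\<lambda>x. hh s a (x + - 2 * \<i>))"
    by (simp add: contour_integral_translate)
  also have "\<dots> = integral {-n..n} (\<lambda>x. hh s a (of_real x + - 2 * \<i>))"
    using n by (subst contour_integral_linepath_Reals_eq) auto
  also have "\<dots> = integral {-n..n} (\<lambda>x. - ker s (a + 2) x)"
    by (intro integral_cong hh_shift)
  also have "\<dots> = - integral {-n..n} (ker s (a + 2))"
    by (rule integral_neg)
  finally show ?thesis .
qed

lemma top_eq:
  assumes n: "n > 0"
  shows "contour_integral (linepath (Complex n 0) (Complex (-n) 0)) (hh s a) =
           - integral {-n..n} (ker s a)"
proof -
  have "contour_integral (linepath (Complex n 0) (Complex (-n) 0)) (hh s a) =
          - contour_integral (linepath (of_real (-n)) (of_real n)) (hh s a)"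
  proof -
    have "Complex n 0 = of_real n" "Complex (-n) 0 = of_real (-n)" by (simp_all add: complex_eq_iff)
    thus ?thesis using contour_integral_reversepath[of "linepath (of_real (-n)) (of_real n)" "hh s a"]
      by simp
  qed
  also have "contour_integral (linepath (of_real (-n)) (of_real n)) (hh s a) = integral {-n..n} (\<lambda>x. hh s a (of_real x))"
    using n by (subst contour_integral_linepath_Reals_eq) auto
  also have "\<dots> = integral {-n..n} (ker s a)"
    by (simp add: hh_real)
  finally show ?thesis .
qed

definition Bn :: "complex \<Rightarrow> real \<Rightarrow> real \<Rightarrow> real" where
  "Bn s a n = (a + 2 + n) powr \<bar>Re s\<bar> * exp (pi * \<bar>Im s\<bar>) / sinh (pi * n / 2)"

lemma vbound:
  assumes a: "a \<ge> 1" and n: "n > 0" and re: "\<bar>Re z\<bar> = n" and im: "-2 \<le> Im z" "Im z \<le> 0"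
  shows "norm (hh s a z) \<le> Bn s a n"
proof -
  define w where "w = of_real a + \<i> * z"
  have rew: "Re w = a - Im z" and imw: "Im w = Re z" by (simp_all add: w_def)
  have w0: "w \<noteq> 0" using rew a im by auto
  have w1: "norm w \<ge> 1" using abs_Re_le_cmod[of w] rew a im by linarith
  have r1: "\<bar>Re w\<bar> \<le> a + 2" using rew a im by auto
  have r2: "\<bar>Im w\<bar> = n" using imw re by simp
  have w2: "norm w \<le> a + 2 + n"
    using cmod_le[of w] r1 r2 by linarith
  have "norm (w powr (-s)) \<le> norm w powr (- Re s) * exp (pi * \<bar>Im s\<bar>)"
    by (rule norm_powr_gen[OF w0])
  also have "norm w powr (- Re s) \<le> (a + 2 + n) powr \<bar>Re s\<bar>"
  proof -
    have "norm w powr (- Re s) \<le> norm w powr \<bar>Re s\<bar>" using w1 by (intro powr_mono) auto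
    also have "\<dots> \<le> (a + 2 + n) powr \<bar>Re s\<bar>" using w1 w2 by (intro powr_mono2) auto
    finally show ?thesis .
  qed
  hence "norm w powr (- Re s) * exp (pi * \<bar>Im s\<bar>) \<le> (a + 2 + n) powr \<bar>Re s\<bar> * exp (pi * \<bar>Im s\<bar>)"
    by (intro mult_right_mono) auto
  finally have num: "norm (w powr (-s)) \<le> (a + 2 + n) powr \<bar>Re s\<bar> * exp (pi * \<bar>Im s\<bar>)" .
  have "\<bar>sinh (Re (of_real pi * z / 2))\<bar> = sinh (pi * n / 2)"
  proof -
    have "Re (of_real pi * z / 2) = pi * Re z / 2" by simp
    moreover have "\<bar>sinh (pi * Re z / 2)\<bar> = sinh (pi * n / 2)"
    proof (cases "Re z \<ge> 0")
      case True thus ?thesis using re n by (simp add: abs_of_nonneg)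
    next
      case False
      hence "Re z = - n" using re by linarith
      thus ?thesis using n by (simp add: abs_of_nonneg)
    qed
    ultimately show ?thesis by simp
  qed
  hence den: "norm (cosh (of_real pi * z / 2)) \<ge> sinh (pi * n / 2)"
    using norm_cosh_ge[of "of_real pi * z / 2"] by simp
  have sp: "sinh (pi * n / 2) > 0" using n by simp
  have "norm (hh s a z) = norm (w powr (-s)) / norm (cosh (of_real pi * z / 2))"
    by (simp add: hh_def w_def norm_divide)
  also have "\<dots> \<le> ((a + 2 + n) powr \<bar>Re s\<bar> * exp (pi * \<bar>Im s\<bar>)) / sinh (pi * n / 2)"
    using num den sp by (intro frac_le) auto
  finally show ?thesis by (simp add: Bn_def)
qed

lemma strip_n:
  assumes a: "a \<ge> 1" and n: "n \<ge> 1"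
  shows "norm (integral {-n..n} (ker s a) + integral {-n..n} (ker s (a + 2)) - 4 * (of_real (a + 1)) powr (-s))
           \<le> 4 * Bn s a n"
proof -
  define p1 where "p1 = Complex (-n) (-2)"
  define p2 where "p2 = Complex n (-2)"
  define p3 where "p3 = Complex n 0"
  define p4 where "p4 = Complex (-n) 0"
  have s1: "closed_segment p1 p2 \<subseteq> SS - {-\<i>}" using n
    by (auto simp: p1_def p2_def closed_segment_same_Im closed_segment_eq_real_ivl SS_def complex_eq_iff)
  have s2: "closed_segment p2 p3 \<subseteq> SS - {-\<i>}" using n
    by (auto simp: p2_def p3_def closed_segment_same_Re closed_segment_eq_real_ivl SS_def complex_eq_iff)
  have s3: "closed_segment p3 p4 \<subseteq> SS - {-\<i>}" using n
    by (auto simp: p3_def p4_def closed_segment_same_Im closed_segment_eq_real_ivl SS_def complex_eq_iff)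
  have s4: "closed_segment p4 p1 \<subseteq> SS - {-\<i>}" using n
    by (auto simp: p4_def p1_def closed_segment_same_Re closed_segment_eq_real_ivl SS_def complex_eq_iff)
  note i1 = hh_integrable[OF a s1, of s] and i2 = hh_integrable[OF a s2, of s]
    and i3 = hh_integrable[OF a s3, of s] and i4 = hh_integrable[OF a s4, of s]
  have "rectpath p1 p3 = linepath p1 p2 +++ linepath p2 p3 +++ linepath p3 p4 +++ linepath p4 p1"
    by (simp add: rectpath_def Let_def p1_def p2_def p3_def p4_def)
  hence "contour_integral (rectpath p1 p3) (hh s a) =
          contour_integral (linepath p1 p2) (hh s a) + contour_integral (linepath p2 p3) (hh s a) +
          contour_integral (linepath p3 p4) (hh s a) + contour_integral (linepath p4 p1) (hh s a)"
    using i1 i2 i3 i4 by (simp add: contour_integrable_joinI valid_path_join add.assoc)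
  moreover have "contour_integral (rectpath p1 p3) (hh s a) = - 4 * (of_real (a + 1)) powr (-s)"
    unfolding p1_def p3_def by (rule rect_eq[OF a n])
  moreover have "contour_integral (linepath p1 p2) (hh s a) = - integral {-n..n} (ker s (a + 2))"
    unfolding p1_def p2_def using n by (intro bottom_eq) auto
  moreover have "contour_integral (linepath p3 p4) (hh s a) = - integral {-n..n} (ker s a)"
    unfolding p3_def p4_def using n by (intro top_eq) auto
  ultimately have eq: "integral {-n..n} (ker s a) + integral {-n..n} (ker s (a + 2)) - 4 * (of_real (a + 1)) powr (-s)
      = contour_integral (linepath p2 p3) (hh s a) + contour_integral (linepath p4 p1) (hh s a)"
    by (simp add: algebra_simps)
  have B0: "Bn s a n \<ge> 0" using n a by (simp add: Bn_def)
  have v1: "norm (contour_integral (linepath p2 p3) (hh s a)) \<le> Bn s a n * norm (p3 - p2)"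
  proof (rule contour_integral_bound_linepath[OF i2 B0])
    fix z assume "z \<in> closed_segment p2 p3"
    hence "Re z = n" "-2 \<le> Im z" "Im z \<le> 0"
      by (auto simp: p2_def p3_def closed_segment_same_Re closed_segment_eq_real_ivl)
    thus "norm (hh s a z) \<le> Bn s a n" using n by (intro vbound[OF a]) auto
  qed
  have v2: "norm (contour_integral (linepath p4 p1) (hh s a)) \<le> Bn s a n * norm (p1 - p4)"
  proof (rule contour_integral_bound_linepath[OF i4 B0])
    fix z assume "z \<in> closed_segment p4 p1"
    hence "Re z = -n" "-2 \<le> Im z" "Im z \<le> 0"
      by (auto simp: p4_def p1_def closed_segment_same_Re closed_segment_eq_real_ivl)
    thus "norm (hh s a z) \<le> Bn s a n" using n by (intro vbound[OF a]) auto
  qed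
  have "norm (p3 - p2) = 2" "norm (p1 - p4) = 2"
    by (simp_all add: p1_def p2_def p3_def p4_def cmod_def)
  hence "norm (contour_integral (linepath p2 p3) (hh s a) + contour_integral (linepath p4 p1) (hh s a)) \<le> 4 * Bn s a n"
    using v1 v2 norm_triangle_ineq[of "contour_integral (linepath p2 p3) (hh s a)" "contour_integral (linepath p4 p1) (hh s a)"]
    by simp
  thus ?thesis using eq by simp
qed


lemma Bn_lim: "(\<lambda>n::nat. 4 * Bn s a (real n)) \<longlonglongrightarrow> 0"
proof -
  have "(\<lambda>n::nat. 4 * ((a + 2 + real n) powr \<bar>Re s\<bar> * exp (pi * \<bar>Im s\<bar>) / ((exp (pi * real n / 2) - exp (- (pi * real n / 2))) / 2))) \<longlonglongrightarrow> 0"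
    by real_asymp
  thus ?thesis by (simp add: Bn_def sinh_field_def)
qed

lemma lim_ker: "a \<ge> 1 \<Longrightarrow> (\<lambda>n::nat. integral {- real n..real n} (ker s a)) \<longlonglongrightarrow> Phi s a"
  unfolding Phi_def
  by (rule lim_UNIV[OF cont_ker ker_bound[of a s "\<bar>Re s\<bar> + \<bar>Im s\<bar>"]]) auto

lemma Phi_rec:
  assumes a: "a \<ge> 1"
  shows "Phi s a + Phi s (a + 2) = 4 * (of_real (a + 1)) powr (-s)"
proof -
  define N where "N = 4 * (of_real (a + 1)) powr (-s)"
  define x where "x = (\<lambda>n::nat. integral {- real n..real n} (ker s a) + integral {- real n..real n} (ker s (a + 2)) - N)"
  have "x \<longlonglongrightarrow> Phi s a + Phi s (a + 2) - N"
    unfolding x_def using a by (intro tendsto_diff tendsto_add tendsto_const lim_ker) auto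
  moreover have "x \<longlonglongrightarrow> 0"
  proof (rule Lim_null_comparison[OF _ Bn_lim])
    show "\<forall>\<^sub>F n in sequentially. norm (x n) \<le> 4 * Bn s a (real n)"
    proof (rule eventually_sequentiallyI[of 1])
      fix n :: nat assume "1 \<le> n"
      thus "norm (x n) \<le> 4 * Bn s a (real n)"
        unfolding x_def N_def using strip_n[OF a, of "real n" s] by simp
    qed
  qed
  ultimately have "Phi s a + Phi s (a + 2) - N = 0" by (rule LIMSEQ_unique)
  thus ?thesis by (simp add: N_def)
qed

lemma Phi_iter:
  "Phi s 1 = (\<Sum>k<n. (-1)^k * 4 * (of_real (2 * real k + 2)) powr (-s)) + (-1)^n * Phi s (1 + 2 * real n)"
proof (induction n)
  case 0 thus ?case by simp
next
  case (Suc n)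
  have "Phi s (1 + 2 * real n) + Phi s (1 + 2 * real n + 2) = 4 * (of_real (1 + 2 * real n + 1)) powr (-s)"
    by (rule Phi_rec) auto
  hence e: "Phi s (1 + 2 * real n) = 4 * (of_real (2 * real n + 2)) powr (-s) - Phi s (1 + 2 * real (Suc n))"
    by (simp add: algebra_simps)
  have "Phi s 1 = (\<Sum>k<n. (-1)^k * 4 * (of_real (2 * real k + 2)) powr (-s)) + (-1)^n * Phi s (1 + 2 * real n)"
    by (rule Suc.IH)
  also have "Phi s (1 + 2 * real n) = 4 * (of_real (2 * real n + 2)) powr (-s) - Phi s (1 + 2 * real (Suc n))"
    by (rule e)
  finally show ?case by (simp add: algebra_simps)
qed

lemma Phi_bound:
  assumes a: "a \<ge> 1" and s: "Re s > 0"
  shows "norm (Phi s a) \<le> a powr (- Re s) * exp (pi * \<bar>Im s\<bar>) * 2 * integral UNIV (\<lambda>t::real. exp (- \<bar>t\<bar>))"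
proof -
  define K where "K = a powr (- Re s) * exp (pi * \<bar>Im s\<bar>) * 2"
  have "norm (integral UNIV (ker s a)) \<le> integral UNIV (\<lambda>t. K * exp (- \<bar>t\<bar>))"
  proof (rule integral_norm_bound_integral[OF ker_int[OF a] expm_int])
    fix t :: real
    define z :: complex where "z = of_real a + \<i> * of_real t"
    have nz: "norm z \<ge> a" using abs_Re_le_cmod[of z] a by (simp add: z_def)
    have "norm (P s a t) \<le> norm z powr (- Re s) * exp (pi * \<bar>Im s\<bar>)"
      using norm_P_le[of a s t] a by (simp add: z_def)
    also have "norm z powr (- Re s) \<le> a powr (- Re s)"
      using nz a s by (intro powr_mono2') auto
    hence "norm z powr (- Re s) * exp (pi * \<bar>Im s\<bar>) \<le> a powr (- Re s) * exp (pi * \<bar>Im s\<bar>)"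
      by (intro mult_right_mono) auto
    finally have p: "norm (P s a t) \<le> a powr (- Re s) * exp (pi * \<bar>Im s\<bar>)" .
    have sw1: "sw t \<le> 2 * exp (- \<bar>t\<bar>)"
    proof -
      have "exp (-pi * \<bar>t\<bar> / 2) \<le> exp (- \<bar>t\<bar>)"
      proof -
        have "2 * \<bar>t\<bar> \<le> pi * \<bar>t\<bar>" using pi_gt3 by (intro mult_right_mono) auto
        thus ?thesis by simp
      qed
      thus ?thesis using sw_le[of t] by linarith
    qed
    have "norm (ker s a t) = norm (P s a t) * sw t" using sw_pos[of t] by (simp add: ker_def norm_mult)
    also have "\<dots> \<le> (a powr (- Re s) * exp (pi * \<bar>Im s\<bar>)) * (2 * exp (- \<bar>t\<bar>))"
      using p sw1 sw_pos[of t] by (intro mult_mono) auto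
    finally show "norm (ker s a t) \<le> K * exp (- \<bar>t\<bar>)" by (simp add: K_def)
  qed
  also have "\<dots> = K * integral UNIV (\<lambda>t::real. exp (- \<bar>t\<bar>))" by simp
  finally show ?thesis by (simp add: K_def Phi_def)
qed

lemma Phi_decay:
  assumes s: "Re s > 0"
  shows "(\<lambda>n::nat. Phi s (1 + 2 * real n)) \<longlonglongrightarrow> 0"
proof (rule Lim_null_comparison)
  show "\<forall>\<^sub>F n in sequentially. norm (Phi s (1 + 2 * real n)) \<le>
     (1 + 2 * real n) powr (- Re s) * exp (pi * \<bar>Im s\<bar>) * 2 * integral UNIV (\<lambda>t::real. exp (- \<bar>t\<bar>))"
    using s by (intro always_eventually allI Phi_bound) auto
  have "(\<lambda>n::nat. (1 + 2 * real n) powr (- Re s)) \<longlonglongrightarrow> 0" using s by real_asymp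
  thus "(\<lambda>n::nat. (1 + 2 * real n) powr (- Re s) * exp (pi * \<bar>Im s\<bar>) * 2 * integral UNIV (\<lambda>t::real. exp (- \<bar>t\<bar>))) \<longlonglongrightarrow> 0"
    by (auto intro!: tendsto_mult_left_zero)
qed

definition E :: "complex \<Rightarrow> complex" where "E s = 2 powr (s - 2) * Phi s 1"

lemma E_holo: "E holomorphic_on UNIV"
  unfolding E_def by (intro holomorphic_intros Phi_holo)

lemma E_sums:
  assumes s: "Re s > 0"
  shows "(\<lambda>k. (-1) ^ k / (of_nat (Suc k)) powr s) sums E s"
proof -
  define f where "f = (\<lambda>k::nat. (-1)^k * 4 * (of_real (2 * real k + 2) :: complex) powr (-s))"
  have "(\<lambda>n. (\<Sum>k<n. f k) + (-1)^n * Phi s (1 + 2 * real n)) \<longlonglongrightarrow> Phi s 1"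
    using Phi_iter[of s] by (simp add: f_def)
  moreover have "(\<lambda>n. (-1)^n * Phi s (1 + 2 * real n)) \<longlonglongrightarrow> 0"
  proof (rule Lim_null_comparison[OF _ tendsto_norm_zero[OF Phi_decay[OF s]]])
    show "\<forall>\<^sub>F n in sequentially. norm ((-1)^n * Phi s (1 + 2 * real n)) \<le> norm (Phi s (1 + 2 * real n))"
      by (simp add: norm_mult norm_power)
  qed
  ultimately have "(\<lambda>n. ((\<Sum>k<n. f k) + (-1)^n * Phi s (1 + 2 * real n)) - (-1)^n * Phi s (1 + 2 * real n)) \<longlonglongrightarrow> Phi s 1 - 0"
    by (intro tendsto_diff)
  hence "f sums Phi s 1" by (simp add: sums_def)
  hence "(\<lambda>k. 2 powr (s - 2) * f k) sums (2 powr (s - 2) * Phi s 1)" by (rule sums_mult)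
  moreover have "2 powr (s - 2) * f k = (-1) ^ k / (of_nat (Suc k)) powr s" for k
  proof -
    have q: "(of_real (2 * real k + 2) :: complex) = 2 * of_nat (Suc k)" by simp
    have "(of_real (2 * real k + 2) :: complex) powr (-s) = (2 * of_nat (Suc k)) powr (-s)"
      by (simp only: q)
    also have "\<dots> = 2 powr (-s) * (of_nat (Suc k)) powr (-s)"
      by (rule powr_times_real) auto
    finally have "(of_real (2 * real k + 2) :: complex) powr (-s) = 2 powr (-s) * (of_nat (Suc k)) powr (-s)" .
    hence fk: "f k = (-1)^k * (4 * 2 powr (-s)) * (of_nat (Suc k)) powr (-s)"
      by (simp add: f_def algebra_simps)
    have one: "(2::complex) powr (s - 2) * (4 * 2 powr (-s)) = 1"
    proof -
      have "(2::complex) powr (s - 2 + - s) = 2 powr (s - 2) * 2 powr (-s)" by (rule powr_add)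
      hence "(2::complex) powr (s - 2) * 2 powr (-s) = 2 powr (s - 2 + - s)" by simp
      also have "\<dots> = 2 powr (-2)" by simp
      also have "\<dots> = 1/4" by (simp add: powr_minus_divide)
      finally show ?thesis by (simp add: algebra_simps)
    qed
    have "2 powr (s - 2) * f k = (-1)^k * ((2::complex) powr (s - 2) * (4 * 2 powr (-s))) * (of_nat (Suc k)) powr (-s)"
      unfolding fk by (simp only: ac_simps)
    also have "\<dots> = (-1)^k * (of_nat (Suc k)) powr (-s)" by (simp only: one mult_1_right)
    also have "\<dots> = (-1) ^ k / (of_nat (Suc k)) powr s" by (simp add: powr_minus_divide)
    finally show ?thesis .
  qed
  ultimately show ?thesis by (simp add: E_def)
qed

lemma eta_eq: "dirichlet_eta = E"
  unfolding dirichlet_eta_def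
proof (rule the_equality)
  show "E holomorphic_on UNIV \<and> (\<forall>s. 0 < Re s \<longrightarrow> (\<lambda>k. (-1) ^ k / (of_nat (Suc k)) powr s) sums E s)"
    using E_holo E_sums by auto
  fix f assume f: "f holomorphic_on UNIV \<and> (\<forall>s. 0 < Re s \<longrightarrow> (\<lambda>k. (-1) ^ k / (of_nat (Suc k)) powr s) sums f s)"
  show "f = E"
  proof
    fix z
    have eqR: "f w = E w" if "w \<in> {s. Re s > 0}" for w
      using that f E_sums[of w] sums_unique2 by auto
    have ne: "{s::complex. Re s > 0} \<noteq> {}"
    proof -
      have "(1::complex) \<in> {s. Re s > 0}" by simp
      thus ?thesis by blast
    qed
    show "f z = E z"
      by (rule analytic_continuation_open[of "{s. Re s > 0}" UNIV f E z])
         (use eqR f E_holo ne in \<open>auto simp: open_halfspace_Re_gt\<close>)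
  qed
qed


lemma Ln_1_it: "Ln (1 + \<i> * of_real t) = of_real (ln (1 + t^2) / 2) + \<i> * of_real (arctan t)"
proof -
  define L where "L = of_real (ln (1 + t^2) / 2) + \<i> * of_real (arctan t)"
  have pos: "1 + t^2 > 0" by (simp add: add_pos_nonneg)
  have sq: "sqrt (1 + t^2) > 0" using pos by simp
  have "exp (ln (1 + t^2) / 2) = (1 + t^2) powr (1/2)"
    using pos by (simp add: powr_def mult.commute)
  also have "\<dots> = sqrt (1 + t^2)" using pos by (simp add: powr_half_sqrt)
  finally have e1: "exp (ln (1 + t^2) / 2) = sqrt (1 + t^2)" .
  have "exp L = of_real (exp (ln (1 + t^2) / 2)) * (of_real (cos (arctan t)) + \<i> * of_real (sin (arctan t)))"
    by (simp add: L_def exp_add Euler mult.commute)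
  also have "\<dots> = 1 + \<i> * of_real t"
    using sq by (simp add: e1 cos_arctan sin_arctan field_simps)
  finally have "exp L = 1 + \<i> * of_real t" .
  moreover have "Ln (exp L) = L"
    using arctan_lbound[of t] arctan_ubound[of t] by (intro Ln_exp) (auto simp: L_def)
  ultimately show ?thesis by (simp add: L_def)
qed

lemma P_exp:
  "P s 1 t = exp (- s * of_real (ln (1 + t^2) / 2)) * exp (- (\<i> * s * of_real (arctan t)))"
proof -
  have nz: "(1::complex) + \<i> * of_real t \<noteq> 0" by (auto simp: complex_eq_iff)
  have "P s 1 t = exp (- s * Ln (1 + \<i> * of_real t))"
    using nz by (simp add: P_def powr_def)
  also have "\<dots> = exp (- s * of_real (ln (1 + t^2) / 2) + - (\<i> * s * of_real (arctan t)))"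
    by (simp add: Ln_1_it algebra_simps)
  finally show ?thesis by (simp only: exp_add)
qed

lemma cos_form:
  "cos (s * of_real (arctan t)) * (of_real (1 + t^2)) powr (- s / 2) = (P s 1 t + P s 1 (-t)) / 2"
proof -
  define l where "l = (of_real (ln (1 + t^2) / 2) :: complex)"
  define A where "A = (of_real (arctan t) :: complex)"
  have pos: "1 + t^2 > 0" by (simp add: add_pos_nonneg)
  have p1: "P s 1 t = exp (- s * l) * exp (- (\<i> * s * A))"
    using P_exp[of s t] by (simp add: l_def A_def)
  have p2: "P s 1 (-t) = exp (- s * l) * exp (\<i> * s * A)"
    using P_exp[of s "-t"] by (simp add: l_def A_def arctan_minus)
  have p3: "(of_real (1 + t^2) :: complex) powr (- s / 2) = exp (- s * l)"
  proof -
    have nz: "(of_real (1 + t^2) :: complex) \<noteq> 0" using pos by (simp only: of_real_eq_0_iff)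
    have "(of_real (1 + t^2) :: complex) powr (- s / 2) = exp (- s / 2 * Ln (of_real (1 + t^2)))"
      by (subst powr_def) (simp only: nz if_False)
    also have "Ln (of_real (1 + t^2)) = of_real (ln (1 + t^2))"
      using pos by (intro Ln_of_real) 
    finally show ?thesis by (simp add: l_def)
  qed
  show ?thesis
    unfolding p1 p2 p3 cos_exp_eq by (simp add: A_def field_simps)
qed


definition wd :: "real \<Rightarrow> real" where "wd t = sinh (pi * t / 2) / (cosh (pi * t / 2))^2"
definition G :: "complex \<Rightarrow> real \<Rightarrow> complex" where "G s t = P s 1 t * of_real (wd t * t)"

lemma wd_le: "\<bar>wd t\<bar> \<le> sw t"
proof -
  define x where "x = pi * t / 2"
  have c: "cosh x > 0" by simp
  have "\<bar>sinh x\<bar> \<le> cosh x"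
  proof -
    have "(sinh x)^2 \<le> (cosh x)^2" by (simp add: cosh_square_eq)
    hence "\<bar>sinh x\<bar> \<le> \<bar>cosh x\<bar>" using power2_le_imp_le[of "\<bar>sinh x\<bar>" "\<bar>cosh x\<bar>"] by simp
    thus ?thesis using c by simp
  qed
  hence "\<bar>sinh x\<bar> / (cosh x)^2 \<le> cosh x / (cosh x)^2" using c by (intro divide_right_mono) auto
  also have "\<dots> = 1 / cosh x" using c by (simp add: power2_eq_square)
  finally show ?thesis by (simp add: wd_def sw_def x_def abs_div)
qed

lemma wd_odd: "wd (-t) * (-t) = wd t * t"
  by (simp add: wd_def)

lemma cont_G: "continuous_on UNIV (G s)"
  unfolding G_def wd_def by (intro continuous_intros cont_P) auto

lemma G_bound:
  assumes R: "\<bar>Re s\<bar> \<le> R" "\<bar>Im s\<bar> \<le> R"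
  shows "norm (G s t) \<le> exp (pi * R) * Cst (R + 1) 1 * exp (- \<bar>t\<bar>)"
proof -
  have "norm (G s t) = norm (P s 1 t) * (\<bar>wd t\<bar> * \<bar>t\<bar>)" by (simp add: G_def norm_mult abs_mult)
  also have "\<dots> \<le> norm (P s 1 t) * ((1 + \<bar>t\<bar>) powr 1 * sw t)"
  proof (intro mult_left_mono)
    have "\<bar>wd t\<bar> * \<bar>t\<bar> \<le> sw t * (1 + \<bar>t\<bar>)"
      using wd_le[of t] sw_pos[of t] by (intro mult_mono) auto
    thus "\<bar>wd t\<bar> * \<bar>t\<bar> \<le> (1 + \<bar>t\<bar>) powr 1 * sw t" by (simp add: mult.commute)
  qed auto
  also have "\<dots> = norm (P s 1 t) * (1 + \<bar>t\<bar>) powr 1 * sw t" by (simp add: mult.assoc)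
  also have "\<dots> \<le> exp (pi * R) * Cst (R + 1) 1 * exp (- \<bar>t\<bar>)"
    by (rule P_bound[OF _ R]) auto
  finally show ?thesis .
qed

lemma G_int: "G s integrable_on UNIV"
  by (rule bounded_int(1)[OF cont_G G_bound[of s "\<bar>Re s\<bar> + \<bar>Im s\<bar>"]]) auto

lemma integrand_eq:
  "cos (s * of_real (arctan t)) * (of_real (1 + t^2)) powr (- s / 2)
     * of_real (sinh (pi * t / 2) / (cosh (pi * t / 2))^2) * of_real t = (G s t + G s (-t)) / 2"
proof -
  have "cos (s * of_real (arctan t)) * (of_real (1 + t^2)) powr (- s / 2)
     * of_real (sinh (pi * t / 2) / (cosh (pi * t / 2))^2) * of_real t
     = (P s 1 t + P s 1 (-t)) / 2 * of_real (wd t * t)"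
    by (subst cos_form) (simp add: wd_def)
  also have "\<dots> = (G s t + G s (-t)) / 2"
    using wd_odd[of t] by (simp add: G_def algebra_simps)
  finally show ?thesis .
qed

lemma lim_half:
  fixes f :: "real \<Rightarrow> complex"
  assumes cont: "continuous_on UNIV f" and bd: "\<And>t. norm (f t) \<le> C * exp (- \<bar>t\<bar>)"
  shows "(\<lambda>n. integral {0..real n} f) \<longlonglongrightarrow> integral {0..} f"
proof -
  define fk where "fk = (\<lambda>k::nat. \<lambda>t. if t \<in> {0..real k} then f t else 0)"
  have i: "fk k integrable_on {0..}" for k
  proof -
    have "f integrable_on {0..real k}"
      by (intro integrable_continuous_interval continuous_on_subset[OF cont]) auto
    moreover have "{0..real k} \<inter> {0..} = {0..real k}" by auto
    ultimately show ?thesis unfolding fk_def integrable_restrict_Int by simp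
  qed
  have h: "(\<lambda>t::real. C * exp (- \<bar>t\<bar>)) integrable_on {0..}"
  proof -
    have "(\<lambda>t::real. exp (- 1 * t)) integrable_on {0..}"
      by (rule integrable_on_exp_minus_to_infinity) auto
    hence "(\<lambda>t::real. exp (- \<bar>t\<bar>)) integrable_on {0..}"
      by (rule integrable_eq) auto
    thus ?thesis using integrable_cmul[of "\<lambda>t::real. exp (- \<bar>t\<bar>)" "{0..}" C] by simp
  qed
  have le: "norm (fk k x) \<le> C * exp (- \<bar>x\<bar>)" for k x
    using bd[of x] order_trans[OF norm_ge_zero bd[of x]] by (auto simp: fk_def)
  have conv: "(\<lambda>k. fk k x) \<longlonglongrightarrow> f x" if "x \<in> {0..}" for x
  proof (rule tendsto_eventually)
    show "\<forall>\<^sub>F k in sequentially. fk k x = f x"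
    proof (rule eventually_sequentiallyI[of "nat \<lceil>x\<rceil>"])
      fix k assume "nat \<lceil>x\<rceil> \<le> k"
      hence "x \<le> real k" by linarith
      thus "fk k x = f x" using that by (auto simp: fk_def)
    qed
  qed
  have "(\<lambda>k. integral {0..} (fk k)) \<longlonglongrightarrow> integral {0..} f"
    by (rule dominated_convergence(2)[OF i h le conv])
  moreover have "integral {0..} (fk k) = integral {0..real k} f" for k
  proof -
    have "integral {0..} (fk k) = integral ({0..real k} \<inter> {0..}) f"
      unfolding fk_def by (rule integral_restrict_Int)
    moreover have "{0..real k} \<inter> {0..} = {0..real k}" by auto
    ultimately show ?thesis by simp
  qed
  ultimately show ?thesis by simp
qed

lemma half_eq: "integral {0..} (\<lambda>t. (G s t + G s (-t)) / 2) = integral UNIV (G s) / 2"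
proof -
  define R where "R = \<bar>Re s\<bar> + \<bar>Im s\<bar>"
  define M where "M = exp (pi * R) * Cst (R + 1) 1"
  have bd: "norm (G s t) \<le> M * exp (- \<bar>t\<bar>)" for t
    unfolding M_def by (rule G_bound) (auto simp: R_def)
  define h where "h = (\<lambda>t. G s t + G s (-t))"
  have ch: "continuous_on UNIV h"
    unfolding h_def by (intro continuous_intros cont_G[THEN continuous_on_compose2]) auto
  have bh: "norm (h t) \<le> (2 * M) * exp (- \<bar>t\<bar>)" for t
    using norm_triangle_ineq[of "G s t" "G s (-t)"] bd[of t] bd[of "-t"] by (simp add: h_def)
  have l1: "(\<lambda>n. integral {0..real n} h) \<longlonglongrightarrow> integral {0..} h"
    by (rule lim_half[OF ch bh])
  have l2: "(\<lambda>n. integral {- real n..real n} (G s)) \<longlonglongrightarrow> integral UNIV (G s)"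
    by (rule lim_UNIV[OF cont_G bd])
  have eq: "integral {0..real n} h = integral {- real n..real n} (G s)" for n
  proof -
    have iG: "G s integrable_on {a..b}" for a b
      by (intro integrable_continuous_interval continuous_on_subset[OF cont_G]) auto
    have iG': "(\<lambda>t. G s (-t)) integrable_on {a..b}" for a b
      by (intro integrable_continuous_interval continuous_intros cont_G[THEN continuous_on_compose2]) auto
    have "integral {0..real n} h = integral {0..real n} (G s) + integral {0..real n} (\<lambda>t. G s (-t))"
      unfolding h_def by (rule integral_add[OF iG iG'])
    also have "integral {0..real n} (\<lambda>t. G s (-t)) = integral {- real n..0} (G s)"
    proof -
      have "integral {- 0..- (- real n)} (\<lambda>t. G s (-t)) = integral {- real n..0} (G s)"
        by (rule Henstock_Kurzweil_Integration.integral_reflect_real)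
      thus ?thesis by simp
    qed
    also have "integral {0..real n} (G s) + integral {- real n..0} (G s) = integral {- real n..real n} (G s)"
      using Henstock_Kurzweil_Integration.integral_combine[where a="- real n" and c=0 and b="real n" and f="G s"] iG by (simp add: add.commute)
    finally show ?thesis .
  qed
  from l1 have "(\<lambda>n. integral {- real n..real n} (G s)) \<longlonglongrightarrow> integral {0..} h" by (simp add: eq)
  with l2 have "integral {0..} h = integral UNIV (G s)" using LIMSEQ_unique by blast
  thus ?thesis by (simp add: h_def)
qed


definition Fc :: "complex \<Rightarrow> complex \<Rightarrow> complex" where
  "Fc s z = z * (1 + \<i> * z) powr (-s) / cosh (of_real pi * z / 2)"

definition Fp :: "complex \<Rightarrow> real \<Rightarrow> complex" where
  "Fp s t = (1 - s) * ker s 1 t + s * ker (s + 1) 1 t - of_real (pi / 2) * G s t"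

lemma Fc_deriv: "((Fc s) has_field_derivative Fp s t) (at (of_real t))"
proof -
  define z0 :: complex where "z0 = of_real t"
  define w0 where "w0 = 1 + \<i> * z0"
  define Q where "Q = w0 powr (-s)"
  define Q1 where "Q1 = w0 powr (-s - 1)"
  define c where "c = cosh (pi * t / 2)"
  define sh where "sh = sinh (pi * t / 2)"
  have w0: "w0 \<notin> \<real>\<^sub>\<le>\<^sub>0" "w0 \<noteq> 0" by (auto simp: w0_def z0_def complex_nonpos_Reals_iff complex_eq_iff)
  have c0: "c > 0" by (simp add: c_def)
  have Cz: "cosh (of_real pi * z0 / 2) = of_real c"
    using cosh_of_real'[of "pi * t / 2"] by (simp add: z0_def c_def)
  have Sz: "sinh (of_real pi * z0 / 2) = of_real sh"
    using sinh_of_real'[of "pi * t / 2"] by (simp add: z0_def sh_def)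
  have dQ: "((\<lambda>z. (1 + \<i> * z) powr (-s)) has_field_derivative ((-s) * w0 powr (-s - 1) * \<i>)) (at z0)"
  proof -
    have dp: "((\<lambda>z. z powr (-s)) has_field_derivative ((-s) * w0 powr (-s - 1))) (at ((\<lambda>z. 1 + \<i> * z) z0))"
      using has_field_derivative_powr[OF w0(1), of "-s"] by (simp add: w0_def)
    have dg: "((\<lambda>z. 1 + \<i> * z) has_field_derivative \<i>) (at z0)"
      by (auto intro!: derivative_eq_intros)
    from DERIV_chain2[where f="\<lambda>z. z powr (-s)" and g="\<lambda>z. 1 + \<i> * z", OF dp dg]
    show ?thesis by simp
  qed
  have dC: "((\<lambda>z. cosh (of_real pi * z / 2)) has_field_derivative (sinh (of_real pi * z0 / 2) * (of_real pi / 2))) (at z0)"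
    by (auto intro!: derivative_eq_intros)
  have raw: "((Fc s) has_field_derivative
      ((1 * (1 + \<i> * z0) powr (-s) + ((-s) * w0 powr (-s - 1) * \<i>) * z0) * cosh (of_real pi * z0 / 2)
        - (z0 * (1 + \<i> * z0) powr (-s)) * (sinh (of_real pi * z0 / 2) * (of_real pi / 2)))
       / (cosh (of_real pi * z0 / 2) * cosh (of_real pi * z0 / 2))) (at z0)"
    unfolding Fc_def
    using c0 by (intro DERIV_divide[OF DERIV_mult[OF DERIV_ident dQ] dC]) (simp add: Cz)
  have QQ: "Q = w0 * Q1"
  proof -
    have "w0 powr ((-s - 1) + 1) = w0 powr (-s - 1) * w0 powr 1" by (rule powr_add)
    thus ?thesis using w0(2) by (simp add: Q_def Q1_def)
  qed
  have "((1 * (1 + \<i> * z0) powr (-s) + ((-s) * w0 powr (-s - 1) * \<i>) * z0) * cosh (of_real pi * z0 / 2)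
        - (z0 * (1 + \<i> * z0) powr (-s)) * (sinh (of_real pi * z0 / 2) * (of_real pi / 2)))
       / (cosh (of_real pi * z0 / 2) * cosh (of_real pi * z0 / 2))
      = ((Q + ((-s) * Q1 * \<i>) * z0) * of_real c - (z0 * Q) * (of_real sh * (of_real pi / 2))) / (of_real c * of_real c)"
    by (simp only: Cz Sz Q_def[symmetric] w0_def[symmetric] Q1_def[symmetric] mult_1_left)
  also have "\<dots> = Fp s t"
  proof -
    have cnz: "(of_real c :: complex) \<noteq> 0" using c0 by simp
    have P1: "P s 1 t = Q" by (simp add: P_def Q_def w0_def z0_def)
    have e: "-(s+1) = -s - 1" by simp
    have P2: "P (s + 1) 1 t = Q1" by (simp only: P_def Q1_def w0_def z0_def of_real_1 e)
    have k1: "ker s 1 t = Q / of_real c"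
      by (simp only: ker_def P1 sw_def c_def[symmetric]) (simp add: divide_inverse)
    have k2: "ker (s + 1) 1 t = Q1 / of_real c"
      by (simp only: ker_def P2 sw_def c_def[symmetric]) (simp add: divide_inverse)
    have g: "G s t = Q * of_real sh * z0 / (of_real c * of_real c)"
      by (simp only: G_def P1 wd_def sh_def[symmetric] c_def[symmetric]) (simp add: z0_def power2_eq_square)
    have "((Q + ((-s) * Q1 * \<i>) * z0) * of_real c - (z0 * Q) * (of_real sh * (of_real pi / 2))) / (of_real c * of_real c)
        = (((1 - s) * Q + s * Q1) * of_real c - of_real (pi/2) * (Q * of_real sh * z0)) / (of_real c * of_real c)"
      unfolding QQ w0_def by (simp add: algebra_simps)
    also have "\<dots> = (1 - s) * (Q / of_real c) + s * (Q1 / of_real c) - of_real (pi / 2) * (Q * of_real sh * z0 / (of_real c * of_real c))"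
      using cnz by (simp add: divide_simps)
    finally show ?thesis unfolding Fp_def k1 k2 g .
  qed
  finally show ?thesis using raw by (simp add: z0_def)
qed

lemma Fc_real: "Fc s (of_real t) = of_real t * P s 1 t * of_real (sw t)"
proof -
  have c: "cosh (of_real pi * of_real t / 2 :: complex) = of_real (cosh (pi * t / 2))"
    using cosh_of_real'[of "pi*t/2"] by simp
  have "Fc s (of_real t) = of_real t * P s 1 t / of_real (cosh (pi * t / 2))"
    by (simp only: Fc_def c P_def of_real_1)
  also have "\<dots> = of_real t * P s 1 t * of_real (sw t)"
    by (simp only: sw_def of_real_divide of_real_1 times_divide_eq_right mult_1_right)
  finally show ?thesis .
qed

lemma Fc_bound:
  assumes R: "\<bar>Re s\<bar> \<le> R" "\<bar>Im s\<bar> \<le> R"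
  shows "norm (Fc s (of_real t)) \<le> exp (pi * R) * Cst (R + 1) 1 * exp (- \<bar>t\<bar>)"
proof -
  have "norm (Fc s (of_real t)) = norm (P s 1 t) * (\<bar>t\<bar> * sw t)"
    using sw_pos[of t] by (simp add: Fc_real norm_mult)
  also have "\<dots> \<le> norm (P s 1 t) * ((1 + \<bar>t\<bar>) powr 1 * sw t)"
    using sw_pos[of t] by (intro mult_left_mono mult_right_mono) auto
  also have "\<dots> = norm (P s 1 t) * (1 + \<bar>t\<bar>) powr 1 * sw t" by (simp add: mult.assoc)
  also have "\<dots> \<le> exp (pi * R) * Cst (R + 1) 1 * exp (- \<bar>t\<bar>)"
    by (rule P_bound[OF _ R]) auto
  finally show ?thesis .
qed

lemma Fp_cont: "continuous_on UNIV (Fp s)"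
  unfolding Fp_def by (intro continuous_intros cont_ker cont_G) auto

lemma Fp_bound: "\<exists>K. \<forall>t. norm (Fp s t) \<le> K * exp (- \<bar>t\<bar>)"
proof -
  define R where "R = \<bar>Re s\<bar> + \<bar>Im s\<bar> + 1"
  define K where "K = norm (1 - s) * (exp (pi * R) * Cst R 1) + norm s * (exp (pi * R) * Cst R 1)
                      + pi / 2 * (exp (pi * R) * Cst (R + 1) 1)"
  have "norm (Fp s t) \<le> K * exp (- \<bar>t\<bar>)" for t
  proof -
    have b1: "norm (ker s 1 t) \<le> exp (pi * R) * Cst R 1 * exp (- \<bar>t\<bar>)"
      by (rule ker_bound) (auto simp: R_def)
    have b2: "norm (ker (s + 1) 1 t) \<le> exp (pi * R) * Cst R 1 * exp (- \<bar>t\<bar>)"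
      by (rule ker_bound) (auto simp: R_def)
    have b3: "norm (G s t) \<le> exp (pi * R) * Cst (R + 1) 1 * exp (- \<bar>t\<bar>)"
      by (rule G_bound) (auto simp: R_def)
    have "norm (Fp s t) \<le> norm ((1 - s) * ker s 1 t) + norm (s * ker (s + 1) 1 t) + norm (of_real (pi / 2) * G s t)"
      unfolding Fp_def by (rule order_trans[OF norm_triangle_ineq4]) (simp add: norm_triangle_ineq)
    also have "\<dots> = norm (1 - s) * norm (ker s 1 t) + norm s * norm (ker (s + 1) 1 t) + pi / 2 * norm (G s t)"
      by (simp add: norm_mult)
    also have "\<dots> \<le> norm (1 - s) * (exp (pi * R) * Cst R 1 * exp (- \<bar>t\<bar>)) + norm s * (exp (pi * R) * Cst R 1 * exp (- \<bar>t\<bar>))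
                    + pi / 2 * (exp (pi * R) * Cst (R + 1) 1 * exp (- \<bar>t\<bar>))"
      by (intro add_mono mult_left_mono b1 b2 b3) auto
    also have "\<dots> = K * exp (- \<bar>t\<bar>)" by (simp add: K_def algebra_simps)
    finally show ?thesis .
  qed
  thus ?thesis by blast
qed

lemma Fp_integral: "integral UNIV (Fp s) = 0"
proof -
  obtain K where K: "\<And>t. norm (Fp s t) \<le> K * exp (- \<bar>t\<bar>)" using Fp_bound by blast
  define R where "R = \<bar>Re s\<bar> + \<bar>Im s\<bar>"
  define M where "M = exp (pi * R) * Cst (R + 1) 1"
  have FB: "norm (Fc s (of_real t)) \<le> M * exp (- \<bar>t\<bar>)" for t
    unfolding M_def by (rule Fc_bound) (auto simp: R_def)
  have ftc: "integral {- real n..real n} (Fp s) = Fc s (of_real (real n)) - Fc s (of_real (- real n))" for n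
  proof -
    have "(Fp s has_integral (Fc s (of_real (real n)) - Fc s (of_real (- real n)))) {- real n..real n}"
      by (rule fundamental_theorem_of_calculus) (auto intro!: has_vector_derivative_real_field Fc_deriv)
    thus ?thesis by (rule integral_unique)
  qed
  have l1: "(\<lambda>n. integral {- real n..real n} (Fp s)) \<longlonglongrightarrow> integral UNIV (Fp s)"
    by (rule lim_UNIV[OF Fp_cont K])
  have l2: "(\<lambda>n. integral {- real n..real n} (Fp s)) \<longlonglongrightarrow> 0"
  proof (rule Lim_null_comparison)
    show "\<forall>\<^sub>F n in sequentially. norm (integral {- real n..real n} (Fp s)) \<le> 2 * M * exp (- real n)"
    proof (intro always_eventually allI)
      fix n :: nat
      have "norm (integral {- real n..real n} (Fp s)) \<le> norm (Fc s (of_real (real n))) + norm (Fc s (of_real (- real n)))"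
        unfolding ftc by (rule norm_triangle_ineq4)
      also have "\<dots> \<le> M * exp (- \<bar>real n\<bar>) + M * exp (- \<bar>- real n\<bar>)" by (intro add_mono FB)
      finally show "norm (integral {- real n..real n} (Fp s)) \<le> 2 * M * exp (- real n)" by simp
    qed
    show "(\<lambda>n::nat. 2 * M * exp (- real n)) \<longlonglongrightarrow> 0" by real_asymp
  qed
  from l1 l2 show ?thesis using LIMSEQ_unique by blast
qed

lemma G_integral: "integral UNIV (G s) = 2 / of_real pi * ((1 - s) * Phi s 1 + s * Phi (s + 1) 1)"
proof -
  have "0 = integral UNIV (Fp s)" by (simp add: Fp_integral)
  also have "\<dots> = (1 - s) * Phi s 1 + s * Phi (s + 1) 1 - of_real (pi / 2) * integral UNIV (G s)"
  proof -
    have i1: "(\<lambda>t. (1 - s) * ker s 1 t) integrable_on UNIV" by (intro integrable_on_mult_right ker_int) auto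
    have i2: "(\<lambda>t. s * ker (s + 1) 1 t) integrable_on UNIV" by (intro integrable_on_mult_right ker_int) auto
    have i3: "(\<lambda>t. of_real (pi / 2) * G s t) integrable_on UNIV" by (intro integrable_on_mult_right G_int)
    have "integral UNIV (Fp s) = integral UNIV (\<lambda>t. (1 - s) * ker s 1 t + s * ker (s + 1) 1 t) - integral UNIV (\<lambda>t. of_real (pi / 2) * G s t)"
      unfolding Fp_def by (rule integral_diff[OF integrable_add[OF i1 i2] i3])
    also have "integral UNIV (\<lambda>t. (1 - s) * ker s 1 t + s * ker (s + 1) 1 t) = integral UNIV (\<lambda>t. (1 - s) * ker s 1 t) + integral UNIV (\<lambda>t. s * ker (s + 1) 1 t)"
      by (rule integral_add[OF i1 i2])
    finally show ?thesis by (simp only: integral_mult_right Phi_def)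
  qed
  finally have h0: "0 = (1 - s) * Phi s 1 + s * Phi (s + 1) 1 - of_real (pi / 2) * integral UNIV (G s)" .
  define X where "X = (1 - s) * Phi s 1 + s * Phi (s + 1) 1"
  define I where "I = integral UNIV (G s)"
  define c :: complex where "c = of_real (pi / 2)"
  have eq: "c * I = X" using h0 unfolding X_def[symmetric] I_def[symmetric] c_def[symmetric]
    by (metis right_minus_eq)
  have nz: "c \<noteq> 0" by (simp add: c_def)
  have "I = X / c" using eq nz by (metis nonzero_mult_div_cancel_left)
  also have "X / c = 2 / of_real pi * X" by (simp add: c_def)
  finally show ?thesis by (simp add: X_def I_def)
qed


theorem mainTheorem5:
  fixes s :: complex
  assumes "s \<noteq> 0"
  shows "dirichlet_eta (s + 1) =
           2 * (s - 1) / s * dirichlet_eta s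
         + 2 powr (s - 1) * of_real pi / s *
           integral {0..} (\<lambda>t::real.
              cos (s * of_real (arctan t)) * (of_real (1 + t^2)) powr (- s / 2)
              * of_real (sinh (pi * t / 2) / (cosh (pi * t / 2))^2) * of_real t)"
proof -
  define A where "A = (2::complex) powr (s - 2)"
  have int: "integral {0..} (\<lambda>t::real.
              cos (s * of_real (arctan t)) * (of_real (1 + t^2)) powr (- s / 2)
              * of_real (sinh (pi * t / 2) / (cosh (pi * t / 2))^2) * of_real t)
        = 1 / of_real pi * ((1 - s) * Phi s 1 + s * Phi (s + 1) 1)"
  proof -
    have "integral {0..} (\<lambda>t::real.
              cos (s * of_real (arctan t)) * (of_real (1 + t^2)) powr (- s / 2)
              * of_real (sinh (pi * t / 2) / (cosh (pi * t / 2))^2) * of_real t)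
          = integral {0..} (\<lambda>t. (G s t + G s (-t)) / 2)"
      by (intro integral_cong integrand_eq)
    also have "\<dots> = integral UNIV (G s) / 2" by (rule half_eq)
    also have "\<dots> = 1 / of_real pi * ((1 - s) * Phi s 1 + s * Phi (s + 1) 1)"
    proof -
      have pi0: "(of_real pi :: complex) \<noteq> 0" by simp
      show ?thesis using pi0 by (simp add: G_integral field_simps)
    qed
    finally show ?thesis .
  qed
  have p1: "(2::complex) powr (s - 1) = 2 * A"
  proof -
    have "(2::complex) powr ((s - 2) + 1) = 2 powr (s - 2) * 2 powr 1" by (rule powr_add)
    thus ?thesis by (simp add: A_def algebra_simps)
  qed
  have p2: "(2::complex) powr (s + 1 - 2) = 2 * A"
    using p1 by (simp add: algebra_simps)
  have pi0: "(of_real pi :: complex) \<noteq> 0" by simp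
  show ?thesis
    unfolding eta_eq E_def int p1 p2 A_def[symmetric]
    using assms pi0 by (simp add: field_simps)
qed

end
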